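(* Let $K\ge 4$ and let $X$ be $\mathbb{R}^2$ with a norm $\|\cdot\|_X$ whose closed unit ball $BX$ is a symmetric convex polygon with $2K$ sides, written as $BX=\bigcap_{k=1}^K\{x:|x\cdot b_k|\le 1\}$ for vectors $b_1,\dots,b_K\in\mathbb{R}^2$. Then there are constants $C,c>0$ and arbitrarily large integers $n$ for which there exist sets $A=A(n)\subset B(0,1/2)$ with $|A|=n$ such that $$|(A-A)\cdot b_k|\le C n^{1-1/K},\quad k=1,\dots,K$$ (in particular $|\Delta_X(A)|\le C' n^{1-1/K}$ for a constant $C'$ independent of $n$), and $$\|x-x'\|_X\ge c\, n^{-1/2}\quad\text{for all } x,x'\in A,\ x\ne x'.$$
   Context: $B(x,r)$ is the closed Euclidean ball of center $x$ and radius $r$; $|A|$ is the cardinality of a finite set; $A-A=\{a-a':a,a'\in A\}$, $A\cdot v=\{a\cdot v: a\in A\}$; $\Delta_X(A)=\{\|x-x'\|_X:x,x'\in A\}$. The constants are independent of $n$. *)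

theory Defs
  imports "HOL-Analysis.Analysis"
begin

definition is_norm_fun :: "(real^2 \<Rightarrow> real) \<Rightarrow> bool" where
  "is_norm_fun N \<longleftrightarrow>
     (\<forall>x. N x \<ge> 0) \<and> (\<forall>x. N x = 0 \<longleftrightarrow> x = 0) \<and>
     (\<forall>a x. N (a *\<^sub>R x) = \<bar>a\<bar> * N x) \<and> (\<forall>x y. N (x + y) \<le> N x + N y)"

end

theory Submission
  imports Defs
begin


definition det2 :: "real^2 \<Rightarrow> real^2 \<Rightarrow> real" where
  "det2 u v = u$1 * v$2 - u$2 * v$1"
definition rot :: "real^2 \<Rightarrow> real^2" where
  "rot u = vector [- (u$2), u$1]"

lemma inner2: "(x::real^2) \<bullet> y = x$1 * y$1 + x$2 * y$2"
  by (simp add: inner_vec_def sum_2)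

lemma rot_inner: "rot u \<bullet> v = det2 u v"
  by (simp add: inner2 rot_def det2_def)

lemma det2_self[simp]: "det2 u u = 0" by (simp add: det2_def)
lemma det2_anti: "det2 u v = - det2 v u" by (simp add: det2_def)

lemma det2_trans:
  assumes "det2 a b = 0" "det2 b c = 0" "b \<noteq> 0" shows "det2 a c = 0"
proof -
  have h1: "a$1 * b$2 - a$2 * b$1 = 0" "b$1 * c$2 - b$2 * c$1 = 0" using assms(1,2) unfolding det2_def by auto
  have "det2 c a * b$1 = a$1 * (c$1*b$2 - b$1*c$2) + c$1 * (a$2*b$1 - a$1*b$2)"
    by (simp add: det2_def algebra_simps)
  also have "\<dots> = 0" using h1 by (simp add: algebra_simps)
  finally have e1: "det2 c a * b$1 = 0" .
  have "det2 c a * b$2 = a$2 * (c$1*b$2 - b$1*c$2) + c$2 * (a$2*b$1 - a$1*b$2)"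
    by (simp add: det2_def algebra_simps)
  also have "\<dots> = 0" using h1 by (simp add: algebra_simps)
  finally have e2: "det2 c a * b$2 = 0" .
  have "b$1 \<noteq> 0 \<or> b$2 \<noteq> 0" using assms(3)
    by (metis exhaust_2 vec_eq_iff zero_index)
  then have "det2 c a = 0" using e1 e2 by (metis mult_eq_0_iff)
  then show ?thesis unfolding det2_def by (simp add: mult.commute)
qed

lemma rot_nz: "u \<noteq> 0 \<Longrightarrow> rot u \<noteq> 0"
proof
  assume u: "u \<noteq> 0" and r: "rot u = 0"
  have "u$2 = 0" using arg_cong[OF r, of "\<lambda>v. v$1"] by (simp add: rot_def)
  moreover have "u$1 = 0" using arg_cong[OF r, of "\<lambda>v. v$2"] by (simp add: rot_def)
  ultimately have "u = 0" by (metis exhaust_2 vec_eq_iff zero_index)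
  then show False using u by simp
qed

locale NB =
  fixes K :: nat and b :: "nat \<Rightarrow> real^2" and N :: "real^2 \<Rightarrow> real"
  assumes K1: "K \<ge> 1"
    and normN: "is_norm_fun N"
    and ball: "{x. N x \<le> 1} = (\<Inter>k\<in>{1..K}. {x. \<bar>x \<bullet> b k\<bar> \<le> 1})"
begin

lemma N_nonneg: "N x \<ge> 0" using normN by (simp add: is_norm_fun_def)
lemma N_zero: "N x = 0 \<longleftrightarrow> x = 0" using normN by (simp add: is_norm_fun_def)
lemma N_scale: "N (a *\<^sub>R x) = \<bar>a\<bar> * N x" using normN by (simp add: is_norm_fun_def)
lemma N_tri: "N (x + y) \<le> N x + N y" using normN by (simp add: is_norm_fun_def)
lemma N0[simp]: "N 0 = 0" using N_zero by simp
lemma N_neg: "N (- x) = N x" using N_scale[of "-1" x] by simp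
lemma N_diff: "N x - N y \<le> N (x + y)"
proof -
  have "N x = N ((x + y) + (- y))" by simp
  also have "\<dots> \<le> N (x+y) + N y" using N_tri N_neg by metis
  finally show ?thesis by simp
qed

lemma N_sum: "finite A \<Longrightarrow> N (sum f A) \<le> (\<Sum>i\<in>A. N (f i))"
proof (induction A rule: finite_induct)
  case empty then show ?case using N_zero by simp
next
  case (insert a A) then show ?case using N_tri[of "f a" "sum f A"] by simp
qed

lemma in_ball: "N x \<le> 1 \<longleftrightarrow> (\<forall>k\<in>{1..K}. \<bar>x \<bullet> b k\<bar> \<le> 1)"
  using ball by blast

lemma N_ge: assumes "k \<in> {1..K}" shows "\<bar>y \<bullet> b k\<bar> \<le> N y"
proof (cases "y = 0")
  case True then show ?thesis by simp
next
  case False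
  then have p: "N y > 0" using N_zero N_nonneg by (metis less_eq_real_def)
  have "N ((1 / N y) *\<^sub>R y) = 1" using p by (simp add: N_scale)
  then have "N ((1 / N y) *\<^sub>R y) \<le> 1" by simp
  then have "\<bar>((1 / N y) *\<^sub>R y) \<bullet> b k\<bar> \<le> 1" using in_ball assms by blast
  moreover have "\<bar>((1 / N y) *\<^sub>R y) \<bullet> b k\<bar> = \<bar>y \<bullet> b k\<bar> / N y" using p by (simp add: abs_mult)
  ultimately show ?thesis using p by (simp add: divide_le_eq)
qed

lemma N_nondeg: assumes "x \<noteq> 0" shows "\<exists>k\<in>{1..K}. x \<bullet> b k \<noteq> 0"
proof (rule ccontr)
  assume "\<not> ?thesis"
  then have h: "\<forall>k\<in>{1..K}. x \<bullet> b k = 0" by auto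
  have p: "N x > 0" using N_zero N_nonneg assms by (metis less_eq_real_def)
  have "N ((2 / N x) *\<^sub>R x) \<le> 1" using in_ball h by simp
  moreover have "N ((2 / N x) *\<^sub>R x) = 2" using p by (simp add: N_scale)
  ultimately show False by simp
qed

lemma N_attained: "\<exists>k\<in>{1..K}. N y = \<bar>y \<bullet> b k\<bar>"
proof (rule ccontr)
  assume a: "\<not> ?thesis"
  define m where "m = Max ((\<lambda>k. \<bar>y \<bullet> b k\<bar>) ` {1..K})"
  have fin: "finite ((\<lambda>k. \<bar>y \<bullet> b k\<bar>) ` {1..K})" and ne: "(\<lambda>k. \<bar>y \<bullet> b k\<bar>) ` {1..K} \<noteq> {}"
    using K1 by auto
  obtain k0 where k0: "k0 \<in> {1..K}" "m = \<bar>y \<bullet> b k0\<bar>"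
    using Max_in[OF fin ne] unfolding m_def by auto
  have le: "\<bar>y \<bullet> b k\<bar> \<le> m" if "k \<in> {1..K}" for k
    using Max_ge[OF fin] that unfolding m_def by auto
  have "N y \<noteq> m" using a k0 by auto
  then have mlt: "m < N y" using N_ge[OF k0(1), of y] k0(2) by linarith
  have m0: "m \<ge> 0" using k0 by simp
  define t where "t = 2 / (N y + m)"
  have tp: "t > 0" using mlt m0 unfolding t_def by simp
  have "N (t *\<^sub>R y) \<le> 1"
  proof -
    have "\<bar>(t *\<^sub>R y) \<bullet> b k\<bar> \<le> 1" if "k \<in> {1..K}" for k
    proof -
      have "\<bar>(t *\<^sub>R y) \<bullet> b k\<bar> = t * \<bar>y \<bullet> b k\<bar>" using tp by (simp add: abs_mult)
      also have "\<dots> \<le> t * m" using le[OF that] tp by simp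
      also have "\<dots> \<le> 1" using mlt m0 unfolding t_def by (simp add: divide_simps)
      finally show ?thesis .
    qed
    then show ?thesis using in_ball by blast
  qed
  moreover have "N (t *\<^sub>R y) = t * N y" using tp by (simp add: N_scale)
  moreover have "t * N y > 1" using mlt m0 unfolding t_def by (simp add: divide_simps)
  ultimately show False by simp
qed

end


definition F :: "real \<Rightarrow> nat \<Rightarrow> (nat \<Rightarrow> real^2) \<Rightarrow> (nat \<Rightarrow> real^2) \<Rightarrow> (nat \<Rightarrow> nat \<times> nat) \<Rightarrow> real^2" where
  "F \<tau> r V1 V2 d = (\<Sum>i<r. \<tau>^(Suc i) *\<^sub>R (real (fst (d i)) *\<^sub>R V1 i + real (snd (d i)) *\<^sub>R V2 i))"

lemma PiE_pair: "d \<in> PiE {..<r} (\<lambda>_. {..<M} \<times> {..<M}) \<Longrightarrow> i < r \<Longrightarrow> fst (d i) < M \<and> snd (d i) < M"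
  using PiE_mem[of d "{..<r}" "\<lambda>_. {..<M} \<times> {..<M}" i] by (auto simp: mem_Times_iff)

lemma F_diff: "F \<tau> r V1 V2 d - F \<tau> r V1 V2 d' =
   (\<Sum>i<r. \<tau>^(Suc i) *\<^sub>R ((real (fst (d i)) - real (fst (d' i))) *\<^sub>R V1 i
          + (real (snd (d i)) - real (snd (d' i))) *\<^sub>R V2 i))"
  unfolding F_def sum_subtractf[symmetric]
  by (rule sum.cong) (auto simp: algebra_simps)

lemma F_norm:
  assumes E: "\<And>i. i < r \<Longrightarrow> norm (V1 i) \<le> E \<and> norm (V2 i) \<le> E"
    and tau: "0 \<le> \<tau>" "\<tau> \<le> 1"
    and small: "real r * \<tau> * (2 * real M * E) \<le> 1/2"
    and d: "d \<in> PiE {..<r} (\<lambda>_. {..<M} \<times> {..<M})"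
  shows "norm (F \<tau> r V1 V2 d) \<le> 1/2"
proof -
  have "norm (F \<tau> r V1 V2 d) \<le> (\<Sum>i<r. norm (\<tau>^(Suc i) *\<^sub>R (real (fst (d i)) *\<^sub>R V1 i + real (snd (d i)) *\<^sub>R V2 i)))"
    unfolding F_def by (rule norm_sum)
  also have "\<dots> \<le> real (card {..<r}) * (\<tau> * (2 * real M * E))"
  proof (rule sum_bounded_above)
    fix i assume i: "i \<in> {..<r}"
    have f: "fst (d i) < M" "snd (d i) < M" using PiE_pair[OF d] i by auto
    have E0: "norm (V1 i) \<le> E" "norm (V2 i) \<le> E" using E i by auto
    have "norm (real (fst (d i)) *\<^sub>R V1 i + real (snd (d i)) *\<^sub>R V2 i)
        \<le> real (fst (d i)) * norm (V1 i) + real (snd (d i)) * norm (V2 i)"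
      by (rule order_trans[OF norm_triangle_ineq]) simp
    also have "\<dots> \<le> real M * E + real M * E"
      using f E0 by (intro add_mono mult_mono) auto
    also have "\<dots> = 2 * real M * E" by simp
    finally have h: "norm (real (fst (d i)) *\<^sub>R V1 i + real (snd (d i)) *\<^sub>R V2 i) \<le> 2 * real M * E" .
    have t: "\<tau>^(Suc i) \<le> \<tau>" using tau by (simp add: power_le_one mult_left_le)
    have "norm (\<tau>^(Suc i) *\<^sub>R (real (fst (d i)) *\<^sub>R V1 i + real (snd (d i)) *\<^sub>R V2 i))
        = \<tau>^(Suc i) * norm (real (fst (d i)) *\<^sub>R V1 i + real (snd (d i)) *\<^sub>R V2 i)"
      using tau by simp
    also have "\<dots> \<le> \<tau> * (2 * real M * E)"
      using h t tau by (intro mult_mono) auto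
    finally show "norm (\<tau>^(Suc i) *\<^sub>R (real (fst (d i)) *\<^sub>R V1 i + real (snd (d i)) *\<^sub>R V2 i)) \<le> \<tau> * (2 * real M * E)" .
  qed
  also have "\<dots> \<le> 1/2" using small by (simp add: mult.assoc)
  finally show ?thesis .
qed

context NB begin

lemma F_sep:
  assumes lower: "\<And>i x y. i < r \<Longrightarrow> x \<in> \<int> \<Longrightarrow> y \<in> \<int> \<Longrightarrow> x \<noteq> 0 \<or> y \<noteq> 0 \<Longrightarrow> \<sigma> \<le> N (x *\<^sub>R V1 i + y *\<^sub>R V2 i)"
    and upper: "\<And>i. i < r \<Longrightarrow> N (V1 i) \<le> B \<and> N (V2 i) \<le> B"
    and tau: "0 < \<tau>" "\<tau> \<le> 1" and sig: "\<sigma> > 0"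
    and small: "real r * \<tau> * (2 * real M * B) \<le> \<sigma> / 4"
    and d: "d \<in> PiE {..<r} (\<lambda>_. {..<M} \<times> {..<M})" "d' \<in> PiE {..<r} (\<lambda>_. {..<M} \<times> {..<M})" "d \<noteq> d'"
  shows "\<tau>^r * \<sigma> / 2 \<le> N (F \<tau> r V1 V2 d - F \<tau> r V1 V2 d')"
proof -
  define \<Delta> where "\<Delta> i = (real (fst (d i)) - real (fst (d' i))) *\<^sub>R V1 i
          + (real (snd (d i)) - real (snd (d' i))) *\<^sub>R V2 i" for i
  have diff: "F \<tau> r V1 V2 d - F \<tau> r V1 V2 d' = (\<Sum>i<r. \<tau>^(Suc i) *\<^sub>R \<Delta> i)"
    unfolding F_diff \<Delta>_def ..
  obtain i1 where i1: "d i1 \<noteq> d' i1" using d(3) by auto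
  define i0 where "i0 = (LEAST i. d i \<noteq> d' i)"
  have i0: "d i0 \<noteq> d' i0" unfolding i0_def by (rule LeastI[of _ i1]) (rule i1)
  have i0r: "i0 < r"
  proof (rule ccontr)
    assume "\<not> i0 < r"
    then have "d i0 = undefined" "d' i0 = undefined" using PiE_arb[OF d(1)] PiE_arb[OF d(2)] by auto
    then show False using i0 by simp
  qed
  have below: "d j = d' j" if "j < i0" for j
    using not_less_Least[OF that[unfolded i0_def]] by simp
  have Bnn: "B \<ge> 0" using upper[of i0] i0r N_nonneg[of "V1 i0"] by linarith
  have split: "{..<r} = {..<Suc i0} \<union> {Suc i0..<r}" using i0r by auto
  have "(\<Sum>i<r. \<tau>^(Suc i) *\<^sub>R \<Delta> i) = (\<Sum>i\<in>{..<Suc i0}. \<tau>^(Suc i) *\<^sub>R \<Delta> i)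
      + (\<Sum>i\<in>{Suc i0..<r}. \<tau>^(Suc i) *\<^sub>R \<Delta> i)"
    unfolding split by (rule sum.union_disjoint) auto
  also have "(\<Sum>i\<in>{..<Suc i0}. \<tau>^(Suc i) *\<^sub>R \<Delta> i) = (\<Sum>i\<in>{..<i0}. \<tau>^(Suc i) *\<^sub>R \<Delta> i) + \<tau>^(Suc i0) *\<^sub>R \<Delta> i0"
    by (rule sum.lessThan_Suc)
  also have "(\<Sum>i\<in>{..<i0}. \<tau>^(Suc i) *\<^sub>R \<Delta> i) = 0"
    by (rule sum.neutral) (auto simp: \<Delta>_def below)
  finally have dsplit: "F \<tau> r V1 V2 d - F \<tau> r V1 V2 d' = \<tau>^(Suc i0) *\<^sub>R \<Delta> i0 + (\<Sum>i\<in>{Suc i0..<r}. \<tau>^(Suc i) *\<^sub>R \<Delta> i)"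
    using diff by simp
  have lo: "\<sigma> \<le> N (\<Delta> i0)"
    unfolding \<Delta>_def
  proof (rule lower[OF i0r])
    show "real (fst (d i0)) - real (fst (d' i0)) \<in> \<int>" "real (snd (d i0)) - real (snd (d' i0)) \<in> \<int>"
      by (auto intro: Ints_diff)
    show "real (fst (d i0)) - real (fst (d' i0)) \<noteq> 0 \<or> real (snd (d i0)) - real (snd (d' i0)) \<noteq> 0"
      using i0 by (auto simp: prod_eq_iff)
  qed
  have rest: "N (\<Sum>i\<in>{Suc i0..<r}. \<tau>^(Suc i) *\<^sub>R \<Delta> i) \<le> \<tau>^(Suc i0) * \<sigma> / 4"
  proof -
    have "N (\<Sum>i\<in>{Suc i0..<r}. \<tau>^(Suc i) *\<^sub>R \<Delta> i) \<le> (\<Sum>i\<in>{Suc i0..<r}. N (\<tau>^(Suc i) *\<^sub>R \<Delta> i))"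
      by (rule N_sum) simp
    also have "\<dots> \<le> real (card {Suc i0..<r}) * (\<tau>^(Suc (Suc i0)) * (2 * real M * B))"
    proof (rule sum_bounded_above)
      fix i assume i: "i \<in> {Suc i0..<r}"
      have f: "fst (d i) < M" "snd (d i) < M" "fst (d' i) < M" "snd (d' i) < M" using PiE_pair[OF d(1)] PiE_pair[OF d(2)] i by auto
      have B0: "N (V1 i) \<le> B" "N (V2 i) \<le> B" using upper i by auto
      have a1: "\<bar>real (fst (d i)) - real (fst (d' i))\<bar> \<le> real M" using f by linarith
      have a2: "\<bar>real (snd (d i)) - real (snd (d' i))\<bar> \<le> real M" using f by linarith
      have "N (\<Delta> i) \<le> \<bar>real (fst (d i)) - real (fst (d' i))\<bar> * N (V1 i) + \<bar>real (snd (d i)) - real (snd (d' i))\<bar> * N (V2 i)"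
        unfolding \<Delta>_def using N_tri[of "(real (fst (d i)) - real (fst (d' i))) *\<^sub>R V1 i" "(real (snd (d i)) - real (snd (d' i))) *\<^sub>R V2 i"]
        by (simp only: N_scale)
      also have "\<dots> \<le> real M * B + real M * B"
        using a1 a2 B0 N_nonneg by (intro add_mono mult_mono) auto
      also have "\<dots> = 2 * real M * B" by simp
      finally have h: "N (\<Delta> i) \<le> 2 * real M * B" .
      have t: "\<tau>^(Suc i) \<le> \<tau>^(Suc (Suc i0))" using tau i by (intro power_decreasing) auto
      have "N (\<tau>^(Suc i) *\<^sub>R \<Delta> i) = \<tau>^(Suc i) * N (\<Delta> i)" using tau by (simp add: N_scale)
      also have "\<dots> \<le> \<tau>^(Suc (Suc i0)) * (2 * real M * B)"
        using h t tau N_nonneg Bnn by (intro mult_mono) auto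
      finally show "N (\<tau>^(Suc i) *\<^sub>R \<Delta> i) \<le> \<tau>^(Suc (Suc i0)) * (2 * real M * B)" .
    qed
    also have "\<dots> \<le> real r * (\<tau>^(Suc (Suc i0)) * (2 * real M * B))"
      using tau Bnn by (intro mult_right_mono) auto
    also have "\<dots> = \<tau>^(Suc i0) * (real r * \<tau> * (2 * real M * B))" by (simp add: algebra_simps)
    also have "\<dots> \<le> \<tau>^(Suc i0) * (\<sigma> / 4)" using small tau by (intro mult_left_mono) auto
    finally show ?thesis by simp
  qed
  have "\<tau>^(Suc i0) * \<sigma> \<le> N (\<tau>^(Suc i0) *\<^sub>R \<Delta> i0)"
    using lo tau by (simp add: N_scale)
  then have "\<tau>^(Suc i0) * \<sigma> - \<tau>^(Suc i0) * \<sigma> / 4 \<le> N (F \<tau> r V1 V2 d - F \<tau> r V1 V2 d')"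
    unfolding dsplit using rest N_diff[of "\<tau>^(Suc i0) *\<^sub>R \<Delta> i0" "(\<Sum>i\<in>{Suc i0..<r}. \<tau>^(Suc i) *\<^sub>R \<Delta> i)"] by linarith
  moreover have "\<tau>^r \<le> \<tau>^(Suc i0)" using tau i0r by (intro power_decreasing) auto
  ultimately have "\<tau>^r * \<sigma> \<le> \<tau>^(Suc i0) * \<sigma>" using sig by (intro mult_right_mono) auto
  moreover have "0 \<le> \<tau>^(Suc i0) * \<sigma>" using tau sig by simp
  ultimately show ?thesis using \<open>\<tau>^(Suc i0) * \<sigma> - \<tau>^(Suc i0) * \<sigma> / 4 \<le> N (F \<tau> r V1 V2 d - F \<tau> r V1 V2 d')\<close>
    by linarith
qed

end

lemma F_count:
  assumes j: "j0 < r" "j1 < r" "V1 j0 \<bullet> w = 0" "V2 j1 \<bullet> w = 0"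
  shows "card {(a - a') \<bullet> w | a a'. a \<in> F \<tau> r V1 V2 ` PiE {..<r} (\<lambda>_. {..<M} \<times> {..<M})
                \<and> a' \<in> F \<tau> r V1 V2 ` PiE {..<r} (\<lambda>_. {..<M} \<times> {..<M})} \<le> (2*M+1)^(2*r-2)"
proof -
  define D where "D = PiE {..<r} (\<lambda>_. {..<M} \<times> {..<M})"
  define Z where "Z = {- int M..int M}"
  define W where "W = PiE {..<r} (\<lambda>i. (if V1 i \<bullet> w = 0 then {0} else Z) \<times> (if V2 i \<bullet> w = 0 then {0} else Z))"
  define g where "g p = (\<Sum>i<r. \<tau>^(Suc i) * (real_of_int (fst (p i)) * (V1 i \<bullet> w) + real_of_int (snd (p i)) * (V2 i \<bullet> w)))" for p
  have sub: "{(a - a') \<bullet> w | a a'. a \<in> F \<tau> r V1 V2 ` D \<and> a' \<in> F \<tau> r V1 V2 ` D} \<subseteq> g ` W"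
  proof
    fix v assume "v \<in> {(a - a') \<bullet> w | a a'. a \<in> F \<tau> r V1 V2 ` D \<and> a' \<in> F \<tau> r V1 V2 ` D}"
    then obtain d d' where dd: "d \<in> D" "d' \<in> D" "v = (F \<tau> r V1 V2 d - F \<tau> r V1 V2 d') \<bullet> w" by auto
    define p where "p = (\<lambda>i\<in>{..<r}. (if V1 i \<bullet> w = 0 then 0 else int (fst (d i)) - int (fst (d' i)),
                                  if V2 i \<bullet> w = 0 then 0 else int (snd (d i)) - int (snd (d' i))))"
    have pW: "p \<in> W"
    proof -
      have bnd: "fst (d i) < M \<and> snd (d i) < M \<and> fst (d' i) < M \<and> snd (d' i) < M" if "i < r" for i
        using PiE_pair[of d r M i] PiE_pair[of d' r M i] dd(1,2) that unfolding D_def by simp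
      have mem: "p i \<in> (if V1 i \<bullet> w = 0 then {0} else Z) \<times> (if V2 i \<bullet> w = 0 then {0} else Z)" if "i < r" for i
        using bnd[OF that] that unfolding p_def Z_def by auto
      show ?thesis unfolding W_def PiE_iff using mem by (simp add: p_def)
    qed
    have "v = (\<Sum>i<r. \<tau>^(Suc i) * ((real (fst (d i)) - real (fst (d' i))) * (V1 i \<bullet> w)
          + (real (snd (d i)) - real (snd (d' i))) * (V2 i \<bullet> w)))"
      unfolding dd(3) F_diff inner_sum_left by (simp add: inner_add_left)
    also have "\<dots> = g p" unfolding g_def p_def
      by (rule sum.cong) auto
    finally show "v \<in> g ` W" using pW by blast
  qed
  have finW: "finite W" unfolding W_def Z_def by (intro finite_PiE) auto
  have "card {(a - a') \<bullet> w | a a'. a \<in> F \<tau> r V1 V2 ` D \<and> a' \<in> F \<tau> r V1 V2 ` D} \<le> card (g ` W)"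
    by (rule card_mono[OF _ sub]) (use finW in auto)
  also have "\<dots> \<le> card W" by (rule card_image_le[OF finW])
  also have "card W = (\<Prod>i<r. card (if V1 i \<bullet> w = 0 then {0} else Z) * card (if V2 i \<bullet> w = 0 then {0::int} else Z))"
    unfolding W_def by (simp add: card_PiE card_cartesian_product)
  also have "\<dots> = (\<Prod>i<r. card (if V1 i \<bullet> w = 0 then {0} else Z)) * (\<Prod>i<r. card (if V2 i \<bullet> w = 0 then {0::int} else Z))"
    by (rule prod.distrib)
  also have "\<dots> \<le> (2*M+1)^(r-1) * (2*M+1)^(r-1)"
  proof -
    have cZ: "card Z = 2*M+1" unfolding Z_def by simp
    have gen: "(\<Prod>i<r. card (if U i \<bullet> w = 0 then {0::int} else Z)) \<le> (2*M+1)^(r-1)"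
      if "j < r" "U j \<bullet> w = 0" for U :: "nat \<Rightarrow> real^2" and j
    proof -
      have "(\<Prod>i<r. card (if U i \<bullet> w = 0 then {0::int} else Z)) =
          card (if U j \<bullet> w = 0 then {0::int} else Z) * (\<Prod>i\<in>{..<r}-{j}. card (if U i \<bullet> w = 0 then {0::int} else Z))"
        using that by (subst prod.remove[of _ j]) auto
      also have "\<dots> = (\<Prod>i\<in>{..<r}-{j}. card (if U i \<bullet> w = 0 then {0::int} else Z))" using that by simp
      also have "\<dots> \<le> (2*M+1)^(r-1)"
        by (rule prod_le_power) (use that cZ in auto)
      finally show ?thesis .
    qed
    show ?thesis using gen[of j0 V1] gen[of j1 V2] j by (intro mult_mono) auto
  qed
  also have "\<dots> = (2*M+1)^(2*r-2)"
  proof -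
    have "2*r-2 = (r-1)+(r-1)" by simp
    then show ?thesis by (simp only: power_add)
  qed
  finally show ?thesis unfolding D_def .
qed



lemma pw1:
  assumes "M \<ge> 1" "r \<ge> (1::nat)"
  shows "real (M^(2*r)) powr (1 - 1/real r) = real M ^ (2*r-2)"
proof -
  have M0: "real M > 0" using assms by simp
  have "real (M^(2*r)) powr (1 - 1/real r) = (real M powr real (2*r)) powr (1 - 1/real r)"
    by (simp only: of_nat_power powr_realpow[OF M0])
  also have "\<dots> = real M powr (real (2*r) * (1 - 1/real r))" by (rule powr_powr)
  also have "real (2*r) * (1 - 1/real r) = real (2*r-2)" using assms(2) by (simp add: field_simps)
  also have "real M powr real (2*r-2) = real M ^ (2*r-2)" using M0 by (rule powr_realpow)
  finally show ?thesis .
qed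

lemma pw2:
  assumes "M \<ge> 1"
  shows "real (M^(2*r)) powr (-1/2) = 1 / real M ^ r"
proof -
  have M0: "real M > 0" using assms by simp
  have "real (M^(2*r)) powr (-1/2) = (real M powr real (2*r)) powr (-1/2)"
    by (simp only: of_nat_power powr_realpow[OF M0])
  also have "\<dots> = real M powr (real (2*r) * (-1/2))" by (rule powr_powr)
  also have "real (2*r) * (-1/2) = - real r" by simp
  also have "real M powr (- real r) = 1 / real M ^ r" using M0 by (simp add: powr_minus powr_realpow divide_inverse)
  finally show ?thesis .
qed

lemma count_real:
  assumes "M \<ge> 1" "r \<ge> (1::nat)" "r \<le> K"
  shows "real ((2*M+1)^(2*r-2)) \<le> 9^K * real (M^(2*r)) powr (1 - 1/real K)"
proof -
  have b3: "real (2*M+1) \<le> 3 * real M" using assms(1) by simp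
  have "real ((2*M+1)^(2*r-2)) = real (2*M+1)^(2*r-2)" by (simp only: of_nat_power)
  also have "\<dots> \<le> (3 * real M)^(2*r-2)" using b3 by (intro power_mono) auto
  finally have "real ((2*M+1)^(2*r-2)) \<le> (3 * real M)^(2*r-2)" .
  also have "\<dots> = 3^(2*r-2) * real M^(2*r-2)" by (simp add: power_mult_distrib)
  also have "\<dots> \<le> 9^K * real M^(2*r-2)"
  proof (intro mult_right_mono)
    have "(3::real)^(2*r-2) \<le> 3^(2*K)" using assms by (intro power_increasing) auto
    also have "\<dots> = 9^K" by (simp add: power_mult)
    finally show "(3::real)^(2*r-2) \<le> 9^K" .
  qed simp
  also have "real M^(2*r-2) = real (M^(2*r)) powr (1 - 1/real r)" using pw1 assms by simp
  also have "\<dots> \<le> real (M^(2*r)) powr (1 - 1/real K)"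
  proof (rule powr_mono)
    show "1 - 1 / real r \<le> 1 - 1 / real K" using assms by (simp add: frac_le)
    show "1 \<le> real (M^(2*r))" using assms by simp
  qed
  finally show ?thesis by simp
qed


theorem lemma1p1:
  fixes K :: nat and b :: "nat \<Rightarrow> real^2" and N :: "real^2 \<Rightarrow> real"
  assumes K4: "K \<ge> 4"
    and normN: "is_norm_fun N"
    and ball: "{x. N x \<le> 1} = (\<Inter>k\<in>{1..K}. {x. \<bar>x \<bullet> b k\<bar> \<le> 1})"
    and sides: "card {F. F facet_of {x. N x \<le> 1}} = 2 * K"
  shows "\<exists>C>0. \<exists>C'>0. \<exists>c>0. \<forall>n0::nat. \<exists>n\<ge>n0. \<exists>A :: (real^2) set.
           finite A \<and> card A = n \<and> A \<subseteq> cball 0 (1/2) \<and>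
           (\<forall>k\<in>{1..K}. real (card {(a - a') \<bullet> b k | a a'. a \<in> A \<and> a' \<in> A})
               \<le> C * real n powr (1 - 1 / real K)) \<and>
           real (card {N (x - x') | x x'. x \<in> A \<and> x' \<in> A}) \<le> C' * real n powr (1 - 1 / real K) \<and>
           (\<forall>x\<in>A. \<forall>x'\<in>A. x \<noteq> x' \<longrightarrow> N (x - x') \<ge> c * real n powr (- 1 / 2))"
proof -
  interpret NB K b N using K4 normN ball by unfold_locales auto
  define R where "R = {k \<in> {1..K}. b k \<noteq> 0 \<and> (\<forall>j\<in>{1..<k}. b j \<noteq> 0 \<longrightarrow> det2 (b j) (b k) \<noteq> 0)}"
  have RK: "R \<subseteq> {1..K}" unfolding R_def by auto
  have finR: "finite R" using RK finite_subset by blast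
  have Rnz: "b j \<noteq> 0" if "j \<in> R" for j using that unfolding R_def by auto
  have cover: "k \<in> {1..K} \<longrightarrow> b k \<noteq> 0 \<longrightarrow> (\<exists>j\<in>R. det2 (b j) (b k) = 0)" for k
  proof (induction k rule: less_induct)
    case (less k)
    show ?case
    proof (intro impI)
      assume k: "k \<in> {1..K}" "b k \<noteq> 0"
      show "\<exists>j\<in>R. det2 (b j) (b k) = 0"
      proof (cases "k \<in> R")
        case True then show ?thesis by (intro bexI[of _ k]) auto
      next
        case False
        then obtain j where j: "j \<in> {1..<k}" "b j \<noteq> 0" "det2 (b j) (b k) = 0"
          using k unfolding R_def by auto
        then have "j \<in> {1..K}" using k by auto
        then obtain i where i: "i \<in> R" "det2 (b i) (b j) = 0" using less.IH[of j] j by auto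
        have "det2 (b i) (b k) = 0" using det2_trans[OF i(2) j(3) j(2)] .
        then show ?thesis using i by blast
      qed
    qed
  qed
  have indep: "det2 (b i) (b j) \<noteq> 0" if "i \<in> R" "j \<in> R" "i \<noteq> j" for i j
  proof (cases "i < j")
    case True then show ?thesis using that RK unfolding R_def by auto
  next
    case False then have "j < i" using that by auto
    then have "det2 (b j) (b i) \<noteq> 0" using that RK unfolding R_def by auto
    then show ?thesis using det2_anti[of "b i" "b j"] by auto
  qed
  define r where "r = card R"
  have rK: "r \<le> K" unfolding r_def using card_mono[OF _ RK] by simp
  have r2: "r \<ge> 2"
  proof (rule ccontr)
    assume "\<not> r \<ge> 2"
    then have "card R \<le> 1" unfolding r_def by simp
    have "R = {} \<or> (\<exists>i. R = {i})"
    proof (cases "card R = 0")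
      case True then show ?thesis using finR by simp
    next
      case False then have "card R = 1" using \<open>card R \<le> 1\<close> by simp
      then show ?thesis by (metis card_1_singletonE)
    qed
    then obtain x :: "real^2" where x: "x \<noteq> 0" "\<forall>k\<in>{1..K}. x \<bullet> b k = 0"
    proof
      assume R0: "R = {}"
      have "vector [1, 0] \<noteq> (0::real^2)" by (metis vector_2(1) zero_index zero_neq_one)
      moreover have "\<forall>k\<in>{1..K}. vector [1, 0] \<bullet> b k = 0"
      proof
        fix k assume "k \<in> {1..K}"
        then have "b k = 0" using cover[of k] R0 by auto
        then show "vector [1, 0] \<bullet> b k = 0" by simp
      qed
      ultimately show thesis using that by blast
    next
      assume "\<exists>i. R = {i}"
      then obtain i where Ri: "R = {i}" by blast
      have "rot (b i) \<noteq> 0" using Rnz[of i] Ri rot_nz by auto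
      moreover have "\<forall>k\<in>{1..K}. rot (b i) \<bullet> b k = 0"
      proof
        fix k assume k: "k \<in> {1..K}"
        show "rot (b i) \<bullet> b k = 0"
        proof (cases "b k = 0")
          case True then show ?thesis by simp
        next
          case False then show ?thesis using cover[of k] k Ri by (auto simp: rot_inner)
        qed
      qed
      ultimately show thesis using that by blast
    qed
    then show False using N_nondeg by blast
  qed
  define es where "es = sorted_list_of_set R"
  define e where "e i = es ! i" for i
  have es: "length es = r" "distinct es" "set es = R" unfolding es_def r_def using finR by auto
  have e_in: "e i \<in> R" if "i < r" for i using es that unfolding e_def by auto
  have e_inj: "i = j" if "i < r" "j < r" "e i = e j" for i j
    using es that unfolding e_def by (simp add: nth_eq_iff_index_eq)
  have e_surj: "\<exists>i<r. e i = j" if "j \<in> R" for j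
    using es that unfolding e_def by (metis in_set_conv_nth)
  have nxt: "Suc i mod r < r" "Suc i mod r \<noteq> i" if "i < r" for i
  proof -
    show "Suc i mod r < r" using r2 by simp
    show "Suc i mod r \<noteq> i"
    proof (cases "Suc i < r")
      case True then show ?thesis by simp
    next
      case False then have "Suc i = r" using that by simp
      then show ?thesis using r2 by auto
    qed
  qed
  define V1 where "V1 i = rot (b (e i))" for i
  define V2 where "V2 i = rot (b (e (Suc i mod r)))" for i
  define S where "S = (\<lambda>(i,j). \<bar>det2 (b i) (b j)\<bar>) ` {(i,j). i \<in> R \<and> j \<in> R \<and> i \<noteq> j}"
  define \<sigma> where "\<sigma> = Min S"
  have finS: "finite S"
  proof -
    have "{(i,j). i \<in> R \<and> j \<in> R \<and> i \<noteq> j} \<subseteq> R \<times> R" by auto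
    then have "finite {(i,j). i \<in> R \<and> j \<in> R \<and> i \<noteq> j}" using finR finite_subset by blast
    then show ?thesis unfolding S_def by simp
  qed
  have neS: "S \<noteq> {}"
  proof -
    have h: "e 0 \<in> R" "e 1 \<in> R" "e 0 \<noteq> e 1" using e_in[of 0] e_in[of 1] e_inj[of 0 1] r2 by auto
    have "(e 0, e 1) \<in> {(i,j). i \<in> R \<and> j \<in> R \<and> i \<noteq> j}" using h by simp
    then show ?thesis unfolding S_def by blast
  qed
  have sig_le: "\<sigma> \<le> \<bar>det2 (b i) (b j)\<bar>" if "i \<in> R" "j \<in> R" "i \<noteq> j" for i j
    unfolding \<sigma>_def using finS that by (intro Min_le) (auto simp: S_def)
  have sig_pos: "\<sigma> > 0"
  proof -
    have "\<sigma> \<in> S" unfolding \<sigma>_def using finS neS by (rule Min_in)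
    then show ?thesis unfolding S_def using indep by auto
  qed
  define B where "B = \<sigma> + (\<Sum>j\<in>R. N (rot (b j)))"
  define E where "E = 1 + (\<Sum>j\<in>R. norm (rot (b j)))"
  have NB_le: "N (rot (b j)) \<le> B" if "j \<in> R" for j
  proof -
    have "N (rot (b j)) \<le> (\<Sum>j\<in>R. N (rot (b j)))"
      using finR that N_nonneg by (intro member_le_sum) auto
    then show ?thesis unfolding B_def using sig_pos by simp
  qed
  have E_le: "norm (rot (b j)) \<le> E" if "j \<in> R" for j
  proof -
    have "norm (rot (b j)) \<le> (\<Sum>j\<in>R. norm (rot (b j)))"
      using finR that by (intro member_le_sum) auto
    then show ?thesis unfolding E_def by simp
  qed
  have E1: "E \<ge> 1" unfolding E_def by (simp add: sum_nonneg)
  have sigB: "\<sigma> \<le> B" unfolding B_def using N_nonneg by (simp add: sum_nonneg)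
  have Bpos: "B > 0" using sig_pos sigB by simp
  have lower: "\<sigma> \<le> N (x *\<^sub>R V1 i + y *\<^sub>R V2 i)"
    if i: "i < r" and xy: "x \<in> \<int>" "y \<in> \<int>" "x \<noteq> 0 \<or> y \<noteq> 0" for i x y
  proof -
    define p where "p = e i"
    define q where "q = e (Suc i mod r)"
    have pq: "p \<in> R" "q \<in> R" "p \<noteq> q" unfolding p_def q_def
      using e_in[OF i] e_in[OF nxt(1)[OF i]] e_inj[OF i nxt(1)[OF i]] nxt(2)[OF i] by auto
    have ip: "(x *\<^sub>R V1 i + y *\<^sub>R V2 i) \<bullet> b p = y * det2 (b q) (b p)"
      unfolding V1_def V2_def p_def[symmetric] q_def[symmetric] by (simp add: inner_add_left rot_inner)
    have iq: "(x *\<^sub>R V1 i + y *\<^sub>R V2 i) \<bullet> b q = x * det2 (b p) (b q)"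
      unfolding V1_def V2_def p_def[symmetric] q_def[symmetric] by (simp add: inner_add_left rot_inner)
    have Np: "\<bar>y * det2 (b q) (b p)\<bar> \<le> N (x *\<^sub>R V1 i + y *\<^sub>R V2 i)"
      using N_ge[of p "x *\<^sub>R V1 i + y *\<^sub>R V2 i"] pq RK ip by auto
    have Nq: "\<bar>x * det2 (b p) (b q)\<bar> \<le> N (x *\<^sub>R V1 i + y *\<^sub>R V2 i)"
      using N_ge[of q "x *\<^sub>R V1 i + y *\<^sub>R V2 i"] pq RK iq by auto
    show ?thesis
    proof (cases "x = 0")
      case False
      then have "\<bar>x\<bar> \<ge> 1" using xy(1) by (rule Ints_nonzero_abs_ge1[rotated])
      then have "\<bar>det2 (b p) (b q)\<bar> \<le> \<bar>x * det2 (b p) (b q)\<bar>"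
        by (simp add: abs_mult mult_le_cancel_right1)
      then show ?thesis using Nq sig_le[OF pq] by linarith
    next
      case True
      then have "y \<noteq> 0" using xy by simp
      then have "\<bar>y\<bar> \<ge> 1" using xy(2) by (rule Ints_nonzero_abs_ge1[rotated])
      then have "\<bar>det2 (b q) (b p)\<bar> \<le> \<bar>y * det2 (b q) (b p)\<bar>"
        by (simp add: abs_mult mult_le_cancel_right1)
      then show ?thesis using Np sig_le[of q p] pq by linarith
    qed
  qed
  have upper: "N (V1 i) \<le> B \<and> N (V2 i) \<le> B" if "i < r" for i
  proof -
    have "e i \<in> R" "e (Suc i mod r) \<in> R" using e_in[OF that] e_in[OF nxt(1)[OF that]] by auto
    then show ?thesis unfolding V1_def V2_def using NB_le by simp
  qed
  have Eup: "norm (V1 i) \<le> E \<and> norm (V2 i) \<le> E" if "i < r" for i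
  proof -
    have "e i \<in> R" "e (Suc i mod r) \<in> R" using e_in[OF that] e_in[OF nxt(1)[OF that]] by auto
    then show ?thesis unfolding V1_def V2_def using E_le by simp
  qed
  define c where "c = (\<sigma> / (8 * real r * B * E))^r * \<sigma> / 2"
  have cpos: "c > 0" unfolding c_def using sig_pos Bpos E1 r2 by simp
  define C :: real where "C = 9^K"
  define C' :: real where "C' = real K * 9^K"
  have Cpos: "C > 0" "C' > 0" unfolding C_def C'_def using K4 by auto
  show ?thesis
  proof (rule exI[of _ C], rule conjI[OF Cpos(1)], rule exI[of _ C'], rule conjI[OF Cpos(2)],
      rule exI[of _ c], rule conjI[OF cpos], rule allI)
    fix n0 :: nat
    define M where "M = Suc n0"
    have M1: "M \<ge> 1" unfolding M_def by simp
    define n where "n = M^(2*r)"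
    define \<tau> where "\<tau> = \<sigma> / (8 * real r * real M * B * E)"
    define D where "D = PiE {..<r} (\<lambda>_. {..<M} \<times> {..<M})"
    define A where "A = F \<tau> r V1 V2 ` D"
    have tau_pos: "\<tau> > 0" unfolding \<tau>_def using sig_pos Bpos E1 r2 M1 by simp
    have tau_le: "\<tau> \<le> 1"
    proof -
      have "\<sigma> \<le> 8 * real r * real M * B * E"
      proof -
        have r1: "1 \<le> real r" using r2 by simp
        have m1: "1 \<le> real M" using M1 by simp
        have "1 * 1 * 1 \<le> real r * real M * E" using r1 m1 E1 by (intro mult_mono) auto
        then have X: "1 \<le> real r * real M * E" by simp
        have X0: "0 \<le> E * (real M * real r)" using X by (simp add: algebra_simps)
        have "B \<le> B * (real r * real M * E)" using X Bpos by simp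
        also have "\<dots> \<le> 8 * (B * (real r * real M * E))" using X X0 Bpos by simp
        also have "\<dots> = 8 * real r * real M * B * E" by (simp add: algebra_simps)
        finally show ?thesis using sigB by simp
      qed
      then show ?thesis unfolding \<tau>_def using sig_pos Bpos E1 r2 M1 by (simp add: divide_le_eq_1)
    qed
    have small1: "real r * \<tau> * (2 * real M * B) \<le> \<sigma> / 4"
    proof -
      have "real r * \<tau> * (2 * real M * B) = \<sigma> / (4 * E)" unfolding \<tau>_def using r2 M1 Bpos E1 by (simp add: field_simps)
      also have "\<dots> \<le> \<sigma> / 4" using E1 sig_pos by (intro divide_left_mono) auto
      finally show ?thesis .
    qed
    have small2: "real r * \<tau> * (2 * real M * E) \<le> 1/2"
    proof -
      have "real r * \<tau> * (2 * real M * E) = \<sigma> / (4 * B)" unfolding \<tau>_def using r2 M1 Bpos E1 by (simp add: field_simps)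
      also have "\<dots> \<le> 1/2" using sigB Bpos by (simp add: divide_simps)
      finally show ?thesis .
    qed
    have sep: "\<tau>^r * \<sigma> / 2 \<le> N (F \<tau> r V1 V2 d - F \<tau> r V1 V2 d')" if "d \<in> D" "d' \<in> D" "d \<noteq> d'" for d d'
    proof -
      have "d \<in> PiE {..<r} (\<lambda>_. {..<M} \<times> {..<M})" "d' \<in> PiE {..<r} (\<lambda>_. {..<M} \<times> {..<M})"
        using that(1,2) unfolding D_def by auto
      from F_sep[OF lower upper tau_pos tau_le sig_pos small1 this that(3)] show ?thesis .
    qed
    have sep_pos: "\<tau>^r * \<sigma> / 2 > 0" using tau_pos sig_pos by simp
    have inj: "inj_on (F \<tau> r V1 V2) D"
    proof (rule inj_onI)
      fix d d' assume "d \<in> D" "d' \<in> D" "F \<tau> r V1 V2 d = F \<tau> r V1 V2 d'"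
      note h = this
      show "d = d'"
      proof (rule ccontr)
        assume "d \<noteq> d'"
        then have "\<tau>^r * \<sigma> / 2 \<le> N (F \<tau> r V1 V2 d - F \<tau> r V1 V2 d')" by (rule sep[OF h(1,2)])
        also have "\<dots> = 0" using h(3) by simp
        finally show False using sep_pos by simp
      qed
    qed
    have finD: "finite D" unfolding D_def by (intro finite_PiE) auto
    have "card D = (M*M)^r" unfolding D_def by (simp add: card_PiE card_cartesian_product)
    also have "(M*M)^r = n" unfolding n_def by (simp add: power_mult power2_eq_square)
    finally have cardD: "card D = n" .
    have cardA: "card A = n" unfolding A_def using card_image[OF inj] cardD by simp
    have finA: "finite A" unfolding A_def using finD by simp
    have nn0: "n \<ge> n0"
    proof -
      have "M \<le> M^(2*r)" by (rule self_le_power) (use M1 r2 in auto)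
      then show ?thesis unfolding n_def using M_def by linarith
    qed
    have n1: "real n \<ge> 1" unfolding n_def using M1 by simp
    have pw_ge1: "1 \<le> real n powr (1 - 1 / real K)" using n1 K4 by (intro ge_one_powr_ge_zero) auto
    have countk: "real (card {(a - a') \<bullet> b k | a a'. a \<in> A \<and> a' \<in> A}) \<le> C * real n powr (1 - 1 / real K)"
      if k: "k \<in> {1..K}" for k
    proof (cases "b k = 0")
      case True
      have "{(a - a') \<bullet> b k | a a'. a \<in> A \<and> a' \<in> A} \<subseteq> {0}" using True by auto
      then have "card {(a - a') \<bullet> b k | a a'. a \<in> A \<and> a' \<in> A} \<le> card {0::real}"
        by (rule card_mono[rotated]) simp
      then have c1: "real (card {(a - a') \<bullet> b k | a a'. a \<in> A \<and> a' \<in> A}) \<le> 1" by simp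
      have "(1::real) * 1 \<le> C * real n powr (1 - 1 / real K)" using pw_ge1 unfolding C_def
        by (intro mult_mono) auto
      then show ?thesis using c1 by simp
    next
      case False
      obtain j where j: "j \<in> R" "det2 (b j) (b k) = 0" using cover[of k] k False by auto
      obtain j0 where j0: "j0 < r" "e j0 = j" using e_surj[OF j(1)] by auto
      define j1 where "j1 = (j0 + r - 1) mod r"
      have j1r: "j1 < r" unfolding j1_def using r2 by simp
      have j1s: "Suc j1 mod r = j0"
      proof -
        have "Suc j1 mod r = Suc ((j0 + r - 1) mod r) mod r" unfolding j1_def ..
        also have "\<dots> = Suc (j0 + r - 1) mod r" by (simp add: mod_Suc_eq)
        also have "Suc (j0 + r - 1) = j0 + r" using r2 by simp
        also have "(j0 + r) mod r = j0" using j0 by simp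
        finally show ?thesis .
      qed
      have w1: "V1 j0 \<bullet> b k = 0" unfolding V1_def using j j0 by (simp add: rot_inner)
      have w2: "V2 j1 \<bullet> b k = 0" unfolding V2_def j1s using j j0 by (simp add: rot_inner)
      have "card {(a - a') \<bullet> b k | a a'. a \<in> A \<and> a' \<in> A} \<le> (2*M+1)^(2*r-2)"
        unfolding A_def D_def by (rule F_count[where ?V1.0=V1 and ?V2.0=V2 and w="b k" and r=r and \<tau>=\<tau> and M=M, OF j0(1) j1r w1 w2])
      then have "real (card {(a - a') \<bullet> b k | a a'. a \<in> A \<and> a' \<in> A}) \<le> real ((2*M+1)^(2*r-2))"
        by (simp only: of_nat_le_iff)
      also have "\<dots> \<le> C * real n powr (1 - 1 / real K)"
        unfolding C_def n_def using count_real[OF M1 _ rK] r2 by simp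
      finally show ?thesis .
    qed
    have P1: "A \<subseteq> cball 0 (1/2)"
    proof
      fix x assume "x \<in> A"
      then obtain d where d: "d \<in> D" "x = F \<tau> r V1 V2 d" unfolding A_def by auto
      have "norm x \<le> 1/2" unfolding d(2)
        by (rule F_norm[OF Eup _ _ small2]) (use tau_pos tau_le d(1) D_def in auto)
      then show "x \<in> cball 0 (1/2)" by simp
    qed
    have P2: "\<forall>k\<in>{1..K}. real (card {(a - a') \<bullet> b k | a a'. a \<in> A \<and> a' \<in> A}) \<le> C * real n powr (1 - 1 / real K)"
      using countk by blast
    have P3: "real (card {N (x - x') | x x'. x \<in> A \<and> x' \<in> A}) \<le> C' * real n powr (1 - 1 / real K)"
    proof -
      define T where "T k = {(a - a') \<bullet> b k | a a'. a \<in> A \<and> a' \<in> A}" for k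
      have finT: "finite (T k)" for k
      proof -
        have "T k = (\<lambda>(a, a'). (a - a') \<bullet> b k) ` (A \<times> A)" unfolding T_def by auto
        then show ?thesis using finA by simp
      qed
      have "{N (x - x') | x x'. x \<in> A \<and> x' \<in> A} \<subseteq> (\<Union>k\<in>{1..K}. abs ` T k)"
      proof
        fix v assume "v \<in> {N (x - x') | x x'. x \<in> A \<and> x' \<in> A}"
        then obtain x x' where xx: "x \<in> A" "x' \<in> A" "v = N (x - x')" by auto
        obtain k where "k \<in> {1..K}" "N (x - x') = \<bar>(x - x') \<bullet> b k\<bar>" using N_attained by blast
        then show "v \<in> (\<Union>k\<in>{1..K}. abs ` T k)" using xx unfolding T_def by blast
      qed
      then have "card {N (x - x') | x x'. x \<in> A \<and> x' \<in> A} \<le> card (\<Union>k\<in>{1..K}. abs ` T k)"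
        using finT by (intro card_mono) auto
      also have "\<dots> \<le> (\<Sum>k\<in>{1..K}. card (abs ` T k))" by (rule card_UN_le) simp
      also have "\<dots> \<le> (\<Sum>k\<in>{1..K}. card (T k))" by (intro sum_mono card_image_le finT)
      finally have "real (card {N (x - x') | x x'. x \<in> A \<and> x' \<in> A}) \<le> (\<Sum>k\<in>{1..K}. real (card (T k)))"
        by (simp only: of_nat_le_iff of_nat_sum[symmetric])
      also have "\<dots> \<le> (\<Sum>k\<in>{1..K}. C * real n powr (1 - 1 / real K))"
        by (intro sum_mono) (use countk in \<open>auto simp: T_def\<close>)
      also have "\<dots> = C' * real n powr (1 - 1 / real K)" unfolding C'_def C_def by simp
      finally show ?thesis .
    qed
    have P4: "\<forall>x\<in>A. \<forall>x'\<in>A. x \<noteq> x' \<longrightarrow> N (x - x') \<ge> c * real n powr (- 1 / 2)"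
    proof (intro ballI impI)
      fix x x' assume xx: "x \<in> A" "x' \<in> A" "x \<noteq> x'"
      obtain d d' where d: "d \<in> D" "x = F \<tau> r V1 V2 d" "d' \<in> D" "x' = F \<tau> r V1 V2 d'"
        using xx(1,2) unfolding A_def by auto
      have "d \<noteq> d'" using d xx(3) by auto
      then have "\<tau>^r * \<sigma> / 2 \<le> N (x - x')" using sep d by simp
      moreover have "c * real n powr (- 1 / 2) = \<tau>^r * \<sigma> / 2"
      proof -
        have "c * real n powr (- 1 / 2) = c / real M ^ r" unfolding n_def using pw2[OF M1, of r] by simp
        also have "\<dots> = \<tau>^r * \<sigma> / 2" unfolding c_def \<tau>_def using M1
          by (simp add: power_divide power_mult_distrib field_simps)
        finally show ?thesis .
      qed
      ultimately show "c * real n powr (- 1 / 2) \<le> N (x - x')" by simp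
    qed
    show "\<exists>n\<ge>n0. \<exists>A :: (real^2) set.
           finite A \<and> card A = n \<and> A \<subseteq> cball 0 (1/2) \<and>
           (\<forall>k\<in>{1..K}. real (card {(a - a') \<bullet> b k | a a'. a \<in> A \<and> a' \<in> A})
               \<le> C * real n powr (1 - 1 / real K)) \<and>
           real (card {N (x - x') | x x'. x \<in> A \<and> x' \<in> A}) \<le> C' * real n powr (1 - 1 / real K) \<and>
           (\<forall>x\<in>A. \<forall>x'\<in>A. x \<noteq> x' \<longrightarrow> N (x - x') \<ge> c * real n powr (- 1 / 2))"
      by (intro exI[of _ n] conjI exI[of _ A] nn0 finA cardA P1 P2 P3 P4)
  qed
qed

end
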